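(* Let $\rho>0$, $\xi\in\mathbb{R}$, and $H=\frac{1}{2(1+\rho u^2)}\big(u^2(P_u^2+P_y^2)+\xi\big)$ on $(u,y)\in(0,\infty)\times\mathbb{R}$. On the level set $H=E$, $P_y=L>0$ with $2E=\xi$, the projections to the $(u,y)$-plane of the trajectories of the Hamiltonian flow degenerate into the lines $$u=\sqrt{\frac{2\rho E-L^2}{L^2}}\,|y-y_0|,\qquad u\in(0,+\infty),$$ for some $y_0\in\mathbb{R}$. *)

theory Defs
  imports Complex_Main
begin

definition hamH :: "real \<Rightarrow> real \<Rightarrow> real \<Rightarrow> real \<Rightarrow> real \<Rightarrow> real \<Rightarrow> real" where
  "hamH \<rho> \<xi> u y pu py = (u^2 * (pu^2 + py^2) + \<xi>) / (2 * (1 + \<rho> * u^2))"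

end

theory Submission
  imports Defs "HOL-Analysis.Analysis"
begin

lemma dH_pu:
  assumes "1 + \<rho> * a^2 \<noteq> 0"
  shows "((\<lambda>s. hamH \<rho> \<xi> a b s q) has_real_derivative (a^2 * p / (1 + \<rho> * a^2))) (at p)"
proof -
  have "((\<lambda>s. hamH \<rho> \<xi> a b s q) has_real_derivative
        (a^2 * (2 * p ^ 1 * 1 + 0) + 0) / (2 * (1 + \<rho> * a^2))) (at p)"
    unfolding hamH_def divide_inverse using assms by (intro derivative_eq_intros) (auto simp: algebra_simps)
  moreover have "(a^2 * (2 * p ^ 1 * 1 + 0) + 0) / (2 * (1 + \<rho> * a^2)) = a^2 * p / (1 + \<rho> * a^2)"
    using assms by (simp add: field_simps)
  ultimately show ?thesis by simp
qed

lemma dH_py: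
  assumes "1 + \<rho> * a^2 \<noteq> 0"
  shows "((\<lambda>s. hamH \<rho> \<xi> a b p s) has_real_derivative (a^2 * q / (1 + \<rho> * a^2))) (at q)"
proof -
  have "((\<lambda>s. hamH \<rho> \<xi> a b p s) has_real_derivative
        (a^2 * (0 + 2 * q ^ 1 * 1) + 0) / (2 * (1 + \<rho> * a^2))) (at q)"
    unfolding hamH_def divide_inverse using assms by (intro derivative_eq_intros) (auto simp: algebra_simps)
  moreover have "(a^2 * (0 + 2 * q ^ 1 * 1) + 0) / (2 * (1 + \<rho> * a^2)) = a^2 * q / (1 + \<rho> * a^2)"
    using assms by (simp add: field_simps)
  ultimately show ?thesis by simp
qed

theorem proposition17:
  fixes \<rho> \<xi> E L :: real and I :: "real set"
    and u y pu py :: "real \<Rightarrow> real"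
  assumes rho: "\<rho> > 0"
    and L: "L > 0"
    and xi: "2 * E = \<xi>"
    and nondeg: "L^2 < 2 * \<rho> * E"
    and I: "open I" "connected I"
    and upos: "\<forall>t\<in>I. u t > 0"
    and level: "\<forall>t\<in>I. hamH \<rho> \<xi> (u t) (y t) (pu t) (py t) = E"
    and momentum: "\<forall>t\<in>I. py t = L"
    and hamilton: "\<forall>t\<in>I. \<exists>du dy dpu dpy.
        (u has_real_derivative du) (at t) \<and> (y has_real_derivative dy) (at t) \<and>
        (pu has_real_derivative dpu) (at t) \<and> (py has_real_derivative dpy) (at t) \<and>
        ((\<lambda>s. hamH \<rho> \<xi> (u t) (y t) s (py t)) has_real_derivative du) (at (pu t)) \<and>
        ((\<lambda>s. hamH \<rho> \<xi> (u t) (y t) (pu t) s) has_real_derivative dy) (at (py t)) \<and>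
        ((\<lambda>s. hamH \<rho> \<xi> s (y t) (pu t) (py t)) has_real_derivative (- dpu)) (at (u t)) \<and>
        ((\<lambda>s. hamH \<rho> \<xi> (u t) s (pu t) (py t)) has_real_derivative (- dpy)) (at (y t))"
  shows "\<exists>y0. \<forall>t\<in>I. u t = sqrt ((2 * \<rho> * E - L^2) / L^2) * \<bar>y t - y0\<bar>"
proof (cases "I = {}")
  case True then show ?thesis by auto
next
  case False
  then obtain t0 where t0: "t0 \<in> I" by auto
  define c where "c = sqrt (2 * \<rho> * E - L^2)"
  have cpos: "c > 0" using nondeg unfolding c_def by simp
  have c2: "c^2 = 2 * \<rho> * E - L^2" using nondeg unfolding c_def by simp
  have Dpos: "1 + \<rho> * (u t)^2 > 0" for t using rho
    by (simp add: add_pos_nonneg)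
  have pu2: "(pu t)^2 = c^2" if t: "t \<in> I" for t
  proof -
    have ut: "u t > 0" using upos t by auto
    have "(u t^2 * (pu t^2 + L^2) + \<xi>) / (2 * (1 + \<rho> * u t^2)) = E"
      using level momentum t unfolding hamH_def by auto
    hence "u t^2 * (pu t^2 + L^2) + 2*E = E * (2 * (1 + \<rho> * u t^2))"
      using Dpos[of t] xi by (simp add: field_simps)
    hence "u t^2 * (pu t^2 + L^2 - 2 * \<rho> * E) = 0" by (simp add: algebra_simps)
    hence "pu t^2 + L^2 - 2 * \<rho> * E = 0" using ut by simp
    thus ?thesis using c2 by simp
  qed
  have pucases: "pu t = c \<or> pu t = - c" if "t \<in> I" for t
    using pu2[OF that] by (simp add: power2_eq_iff)
  have cont: "continuous_on I pu"
  proof (rule continuous_at_imp_continuous_on, intro ballI)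
    fix t assume "t \<in> I"
    then obtain d where "(pu has_real_derivative d) (at t)" using hamilton by blast
    thus "isCont pu t" by (rule DERIV_isCont)
  qed
  define p where "p = pu t0"
  have puconst: "pu t = p" if t: "t \<in> I" for t
  proof (rule ccontr)
    assume ne: "pu t \<noteq> p"
    have conn: "connected (pu ` I)" using connected_continuous_image[OF cont I(2)] .
    have "c \<in> pu ` I \<and> - c \<in> pu ` I"
    proof (cases "pu t = c")
      case True
      hence "pu t0 = - c" using pucases[OF t0] ne unfolding p_def by auto
      thus ?thesis using True t t0 by (metis image_eqI)
    next
      case False
      hence "pu t = - c" "pu t0 = c" using pucases[OF t0] pucases[OF t] ne unfolding p_def by auto
      thus ?thesis using t t0 by (metis image_eqI)
    qed
    hence "{-c..c} \<subseteq> pu ` I" using connected_contains_Icc[OF conn] by blast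
    hence "0 \<in> pu ` I" using cpos by auto
    then obtain s where "s \<in> I" "pu s = 0" by auto
    thus False using pucases[of s] cpos by auto
  qed
  have pne: "p \<noteq> 0" using pucases[OF t0] cpos unfolding p_def by auto
  define k where "k = p / L"
  have kne: "k \<noteq> 0" using pne L unfolding k_def by simp
  have contg: "continuous_on I (\<lambda>t. u t - k * y t)"
  proof (rule continuous_at_imp_continuous_on, intro ballI)
    fix t assume "t \<in> I"
    then obtain du dy where "(u has_real_derivative du) (at t)" "(y has_real_derivative dy) (at t)"
      using hamilton by blast
    hence "isCont u t" "isCont y t" by (auto intro: DERIV_isCont)
    thus "isCont (\<lambda>t. u t - k * y t) t" by (intro continuous_intros)
  qed
  have derg: "\<forall>t\<in>I - {}. ((\<lambda>t. u t - k * y t) has_real_derivative 0) (at t)"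
  proof
    fix t assume tI: "t \<in> I - {}"
    hence t: "t \<in> I" by simp
    then obtain du dy where du: "(u has_real_derivative du) (at t)"
      and dy: "(y has_real_derivative dy) (at t)"
      and hdu: "((\<lambda>s. hamH \<rho> \<xi> (u t) (y t) s (py t)) has_real_derivative du) (at (pu t))"
      and hdy: "((\<lambda>s. hamH \<rho> \<xi> (u t) (y t) (pu t) s) has_real_derivative dy) (at (py t))"
      using hamilton by blast
    have Dne: "1 + \<rho> * (u t)^2 \<noteq> 0" using Dpos[of t] by simp
    have du_eq: "du = (u t)^2 * pu t / (1 + \<rho> * (u t)^2)"
      using DERIV_unique[OF hdu dH_pu[OF Dne]] .
    have dy_eq: "dy = (u t)^2 * py t / (1 + \<rho> * (u t)^2)"
      using DERIV_unique[OF hdy dH_py[OF Dne]] .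
    have "du - k * dy = 0"
      using du_eq dy_eq puconst[OF t] momentum t L unfolding k_def by (simp add: field_simps)
    moreover have "((\<lambda>t. u t - k * y t) has_real_derivative (du - k * dy)) (at t)"
      using du dy by (intro derivative_eq_intros) auto
    ultimately show "((\<lambda>t. u t - k * y t) has_real_derivative 0) (at t)" by simp
  qed
  obtain C where C: "\<And>t. t \<in> I \<Longrightarrow> u t - k * y t = C"
    using DERIV_zero_connected_constant[OF I(2) I(1) finite.emptyI contg derg] by blast
  have sq: "sqrt ((2 * \<rho> * E - L^2) / L^2) = \<bar>k\<bar>"
  proof -
    have "(2 * \<rho> * E - L^2) / L^2 = k^2"
      using c2[symmetric] pu2[OF t0] L unfolding k_def p_def by (simp add: power_divide)
    thus ?thesis by simp
  qed
  show ?thesis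
  proof (intro exI ballI)
    fix t assume t: "t \<in> I"
    have e: "u t = k * (y t - (- C / k))" using C[OF t] kne by (simp add: field_simps)
    have "u t = \<bar>u t\<bar>" using upos t by auto
    also have "\<dots> = \<bar>k\<bar> * \<bar>y t - (- C / k)\<bar>" using e by (simp add: abs_mult)
    finally show "u t = sqrt ((2 * \<rho> * E - L^2) / L^2) * \<bar>y t - (- C / k)\<bar>" using sq by simp
  qed
qed

end
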